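(* For every integer $r\ge1$, the characteristic polynomial of the signed adjacency matrix of $\mathcal{Q}_{r,r,2r}$ is $$\det\bigl(xI-M(\mathcal{Q}_{r,r,2r})\bigr)=(x^2+x-1)^{2r-1}\bigl(x^2-(2r-1)x-1\bigr).$$ In particular $\lambda_{\min}(\mathcal{Q}_{r,r,2r})=-\frac{1+\sqrt5}{2}$.
   Context: An edge-signed graph is a finite simple graph each of whose edges is labelled $+$ or $-$; its signed adjacency matrix $M(\mathcal{S})$ has $(u,v)$-entry $1$ for a $(+)$-edge, $-1$ for a $(-)$-edge, $0$ otherwise, and $\lambda_{\min}(\mathcal{S})$ denotes its smallest eigenvalue. For non-negative integers $p,q,r$ with $p+q\le r$, $\mathcal{Q}_{p,q,r}$ is the edge-signed graph defined as follows: its vertex set is a disjoint union $V_p\cup V_q\cup V_r$ with $|V_p|=p$, $|V_q|=q$, $|V_r|=r$; choose disjoint subsets $U_p,U_q\subseteq V_r$ with $|U_p|=p$, $|U_q|=q$ and bijections $\sigma:V_p\to U_p$, $\rho:V_q\to U_q$. The $(+)$-edges are all pairs of distinct vertices of $V_r$ together with the pairs $\{v,\sigma(v)\}$, $v\in V_p$; the $(-)$-edges are the pairs $\{v,\rho(v)\}$, $v\in V_q$; there are no other edges. *)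

theory Defs
  imports "Jordan_Normal_Form.Char_Poly"
begin

text \<open>Concrete labelling of Q_{p,q,r} on vertices 0..p+q+r-1:
  V_r = {0..<r}, V_p = {r..<r+p}, V_q = {r+p..<r+p+q};
  sigma(r+i) = i (so U_p = {0..<p}), rho(r+p+j) = p+j (so U_q = {p..<p+q}).\<close>

definition Q_plus_edge :: "nat \<Rightarrow> nat \<Rightarrow> nat \<Rightarrow> nat \<Rightarrow> nat \<Rightarrow> bool" where
  "Q_plus_edge p q r u v \<longleftrightarrow>
     (u < r \<and> v < r \<and> u \<noteq> v)
     \<or> (r \<le> u \<and> u < r + p \<and> v = u - r)
     \<or> (r \<le> v \<and> v < r + p \<and> u = v - r)"

definition Q_minus_edge :: "nat \<Rightarrow> nat \<Rightarrow> nat \<Rightarrow> nat \<Rightarrow> nat \<Rightarrow> bool" where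
  "Q_minus_edge p q r u v \<longleftrightarrow>
     (r + p \<le> u \<and> u < r + p + q \<and> v = u - r)
     \<or> (r + p \<le> v \<and> v < r + p + q \<and> u = v - r)"

definition Q_mat :: "nat \<Rightarrow> nat \<Rightarrow> nat \<Rightarrow> real mat" where
  "Q_mat p q r = mat (p + q + r) (p + q + r)
     (\<lambda>(u, v). if Q_plus_edge p q r u v then 1
               else if Q_minus_edge p q r u v then -1 else 0)"

definition lambda_min :: "real mat \<Rightarrow> real" where
  "lambda_min A = Min {k. eigenvalue A k}"

end

theory Submission imports Defs begin
lemma ifmul: "(if P then 1 else 0) * (x::'a::comm_ring_1) = (if P then x else 0)" by simp

lemma detJ:
  fixes c d :: "'a::comm_ring_1"
  assumes m: "m \<ge> 1"
  shows "det (mat m m (\<lambda>(i,j). (if i=j then c else 0) - d)) = c^(m-1) * (c - of_nat m * d)"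
proof -
  define M where "M = mat m m (\<lambda>(i,j). (if i=j then c else 0) - d)"
  define R :: "'a mat" where "R = mat m m (\<lambda>(i,j). if i=j \<or> j=0 then 1 else 0)"
  define L :: "'a mat" where "L = mat m m (\<lambda>(i,j). (if i=j then 1 else 0) - (if 0<i \<and> j=0 then 1 else 0))"
  define T where "T = mat m m (\<lambda>(i,j). if i=0 then (if j=0 then c - of_nat m * d else -d) else (if i=j then c else 0))"
  have MR: "M * R = mat m m (\<lambda>(i,j). if j=0 then c - of_nat m * d else (if i=j then c else 0) - d)"
  proof (rule eq_matI)
    fix i j assume ij: "i < dim_row (mat m m (\<lambda>(i,j). if j=0 then c - of_nat m * d else (if i=j then c else 0) - d))"
       "j < dim_col (mat m m (\<lambda>(i,j). if j=0 then c - of_nat m * d else (if i=j then c else 0) - d))"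
    hence i: "i < m" and j: "j < m" by auto
    have "(M * R) $$ (i,j) = (\<Sum>l<m. M $$ (i,l) * R $$ (l,j))"
      using i j by (simp add: M_def R_def scalar_prod_def atLeast0LessThan)
    also have "\<dots> = (\<Sum>l<m. ((if i=l then c else 0) - d) * (if l=j \<or> j=0 then 1 else 0))"
      using i j by (intro sum.cong, auto simp: M_def R_def)
    also have "\<dots> = (if j=0 then c - of_nat m * d else (if i=j then c else 0) - d)"
    proof (cases "j = 0")
      case True
      then show ?thesis using i by (simp add: sum_subtractf)
    next
      case False
      then show ?thesis using j by (simp add: if_distrib cong: if_cong)
    qed
    finally show "(M * R) $$ (i,j) = mat m m (\<lambda>(i,j). if j=0 then c - of_nat m * d else (if i=j then c else 0) - d) $$ (i,j)"
      using i j by simp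
  qed (auto simp: M_def R_def)
  have LMR: "L * (M * R) = T"
  proof (rule eq_matI)
    fix i j assume ij: "i < dim_row T" "j < dim_col T"
    hence i: "i < m" and j: "j < m" by (auto simp: T_def)
    have "(L * (M * R)) $$ (i,j) = (\<Sum>l<m. L $$ (i,l) * (M*R) $$ (l,j))"
      using i j by (simp add: MR L_def scalar_prod_def atLeast0LessThan)
    also have "\<dots> = (\<Sum>l<m. ((if i=l then 1 else 0) - (if 0<i \<and> l=0 then 1 else 0)) * (if j=0 then c - of_nat m * d else (if l=j then c else 0) - d))"
      using i j by (intro sum.cong, auto simp: MR L_def)
    also have "\<dots> = (\<Sum>l<m. (if i=l then (if j=0 then c - of_nat m * d else (if l=j then c else 0) - d) else 0))
        - (if 0<i then (\<Sum>l<m. (if l=0 then (if j=0 then c - of_nat m * d else (if l=j then c else 0) - d) else 0)) else 0)"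
      by (simp add: left_diff_distrib sum_subtractf ifmul)
    also have "\<dots> = T $$ (i,j)"
      using i j m by (auto simp: T_def)
    finally show "(L * (M * R)) $$ (i,j) = T $$ (i,j)" .
  qed (auto simp: T_def L_def MR)
  have cM: "M \<in> carrier_mat m m" and cR: "R \<in> carrier_mat m m" and cL: "L \<in> carrier_mat m m"
    by (auto simp: M_def R_def L_def)
  have dR: "det R = 1"
    by (subst det_lower_triangular[OF _ cR], auto simp: R_def prod_list_diag_prod)
  have dL: "det L = 1"
    by (subst det_lower_triangular[OF _ cL], auto simp: L_def prod_list_diag_prod intro!: prod.neutral)
  have dT: "det T = c^(m-1) * (c - of_nat m * d)"
  proof -
    have "det T = (\<Prod>i<m. T $$ (i,i))"
      by (subst det_upper_triangular[of _ m], auto simp: T_def upper_triangular_def prod_list_diag_prod atLeast0LessThan)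
    also have "\<dots> = (c - of_nat m * d) * (\<Prod>i\<in>{1..<m}. c)"
      using m by (simp add: T_def lessThan_atLeast0 prod.atLeast_Suc_lessThan del: prod_constant)
    finally show ?thesis by (simp add: mult.commute)
  qed
  have "det T = det L * det M * det R"
    unfolding LMR[symmetric] using cM cR cL
    by (simp add: det_mult[of _ m] mult_carrier_mat[of _ m m _ m] mult.assoc)
  with dR dL dT show ?thesis by (simp add: M_def)
qed
lemma Q_entry:
  assumes i: "i < 4*r" and j: "j < 4*r"
  shows "Q_mat r r (2*r) $$ (i,j) =
    (if i < 2*r then (if j < 2*r then (if i = j then 0 else 1)
                      else (if j - 2*r = i then (if i < r then 1 else -1) else 0))
     else (if j < 2*r then (if i - 2*r = j then (if j < r then 1 else -1) else 0) else 0))"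
proof -
  have ij: "i < r + r + 2*r" "j < r + r + 2*r" using i j by auto
  show ?thesis
  proof (cases "i < 2*r")
    case True
    then show ?thesis
    proof (cases "j < 2*r")
      case True
      then show ?thesis using \<open>i < 2*r\<close> ij by (simp add: Q_mat_def Q_plus_edge_def Q_minus_edge_def)
    next
      case False
      then show ?thesis using \<open>i < 2*r\<close> ij by (auto simp: Q_mat_def Q_plus_edge_def Q_minus_edge_def)
    qed
  next
    case False
    then show ?thesis
    proof (cases "j < 2*r")
      case True
      then show ?thesis using \<open>\<not> i < 2*r\<close> ij by (auto simp: Q_mat_def Q_plus_edge_def Q_minus_edge_def)
    next
      case False
      then show ?thesis using \<open>\<not> i < 2*r\<close> ij by (auto simp: Q_mat_def Q_plus_edge_def Q_minus_edge_def)
    qed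
  qed
qed

lemma Q_carrier: "Q_mat r r (2*r) \<in> carrier_mat (4*r) (4*r)"
  by (simp add: Q_mat_def)

lemma block_eq:
  fixes k :: real and r :: nat
  defines "n \<equiv> 2 * r"
  shows "- char_matrix (Q_mat r r (2*r)) k =
    four_block_mat (mat n n (\<lambda>(i,j). if i=j then k else -1))
                   (mat n n (\<lambda>(i,j). if i=j then (if i<r then -1 else 1) else 0))
                   (mat n n (\<lambda>(i,j). if i=j then (if i<r then -1 else 1) else 0))
                   (mat n n (\<lambda>(i,j). if i=j then k else 0))"
  (is "?L = ?R")
proof (rule eq_matI)
  fix i j assume "i < dim_row ?R" "j < dim_col ?R"
  hence i: "i < 4*r" and j: "j < 4*r" by (auto simp: n_def)
  have L: "?L $$ (i,j) = (if i = j then k else 0) - Q_mat r r (2*r) $$ (i,j)"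
    using i j Q_carrier[of r] by (simp add: char_matrix_def)
  have R: "?R $$ (i,j) = (if i < n then (if j < n then (if i=j then k else -1)
            else (if i = j - n then (if i<r then -1 else 1) else 0))
          else (if j < n then (if i - n = j then (if i - n<r then -1 else 1) else 0)
            else (if i - n = j - n then k else 0)))"
    using i j by (simp add: n_def)
  show "?L $$ (i,j) = ?R $$ (i,j)"
    unfolding L R Q_entry[OF i j] using i j by (auto simp: n_def)
qed (auto simp: n_def char_matrix_def Q_mat_def)

lemma det_char:
  fixes k :: real and r :: nat
  assumes r: "r \<ge> 1"
  shows "det (- char_matrix (Q_mat r r (2*r)) k) = (k^2+k-1)^(2*r-1) * ((k^2+k-1) - of_nat (2*r) * k)"
proof -
  define n where "n = 2 * r"
  define A :: "real mat" where "A = mat n n (\<lambda>(i,j). if i=j then k else -1)"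
  define B :: "real mat" where "B = mat n n (\<lambda>(i,j). if i=j then (if i<r then -1 else 1) else 0)"
  define D :: "real mat" where "D = mat n n (\<lambda>(i,j). if i=j then k else 0)"
  have D: "D = k \<cdot>\<^sub>m 1\<^sub>m n" by (rule eq_matI, auto simp: D_def)
  have cA: "A \<in> carrier_mat n n" and cB: "B \<in> carrier_mat n n" and cD: "D \<in> carrier_mat n n"
    by (auto simp: A_def B_def D_def)
  have BD: "B * D = D * B" unfolding D using cB
    by (simp add: mult_smult_distrib[OF cB one_carrier_mat] mult_smult_assoc_mat[OF one_carrier_mat cB])
  have BB: "B * B = 1\<^sub>m n"
  proof (rule eq_matI)
    fix i j assume "i < dim_row (1\<^sub>m n :: real mat)" "j < dim_col (1\<^sub>m n :: real mat)"
    hence i: "i < n" and j: "j < n" by auto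
    have "(B * B) $$ (i,j) = (\<Sum>l\<in>{0..<n}. B $$ (i,l) * B $$ (l,j))"
      using i j cB by (simp add: scalar_prod_def)
    also have "\<dots> = (\<Sum>l\<in>{0..<n}. if l = i then B $$ (i,i) * B $$ (i,j) else 0)"
      using i j by (intro sum.cong, auto simp: B_def)
    also have "\<dots> = B $$ (i,i) * B $$ (i,j)" using i by simp
    also have "\<dots> = 1\<^sub>m n $$ (i,j)" using i j by (auto simp: B_def)
    finally show "(B * B) $$ (i,j) = 1\<^sub>m n $$ (i,j)" .
  qed (use cB in auto)
  have M: "A * D - B * B = mat n n (\<lambda>(i,j). (if i=j then k^2+k-1 else 0) - k)"
    unfolding BB D using cA
    by (intro eq_matI, auto simp: mult_smult_distrib[OF cA one_carrier_mat] A_def power2_eq_square algebra_simps)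
  have "det (- char_matrix (Q_mat r r (2*r)) k) = det (four_block_mat A B B D)"
    unfolding block_eq A_def B_def D_def n_def ..
  also have "\<dots> = det (A * D - B * B)"
    by (rule det_four_block_mat[OF cA cB cB cD BD])
  also have "\<dots> = det (mat n n (\<lambda>(i,j). (if i=j then k^2+k-1 else 0) - k))"
    unfolding M ..
  also have "\<dots> = (k^2+k-1)^(n-1) * ((k^2+k-1) - of_nat n * k)"
    by (rule detJ, use r in \<open>simp add: n_def\<close>)
  finally show ?thesis by (simp add: n_def)
qed

theorem mainTheorem6:
  fixes r :: nat
  assumes "r \<ge> 1"
  shows "char_poly (Q_mat r r (2 * r)) =
           [:-1, 1, 1:] ^ (2 * r - 1) * [:-1, - (2 * real r - 1), 1:]
         \<and> lambda_min (Q_mat r r (2 * r)) = - (1 + sqrt 5) / 2"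
proof -
  define P :: "real poly" where "P = [:-1, 1, 1:] ^ (2 * r - 1) * [:-1, - (2 * real r - 1), 1:]"
  have evalP: "poly P k = (k^2+k-1)^(2*r-1) * (k^2 - (2*real r - 1)*k - 1)" for k
    by (simp add: P_def power2_eq_square algebra_simps)
  have CP: "char_poly (Q_mat r r (2 * r)) = P"
  proof -
    have "poly (char_poly (Q_mat r r (2 * r))) = poly P"
    proof
      fix k :: real
      have "poly (char_poly (Q_mat r r (2 * r))) k = det (- char_matrix (Q_mat r r (2*r)) k)"
        by (rule char_poly_matrix[OF Q_carrier])
      also have "\<dots> = (k^2+k-1)^(2*r-1) * ((k^2+k-1) - of_nat (2*r) * k)"
        by (rule det_char[OF assms])
      also have "\<dots> = poly P k" unfolding evalP by (simp add: algebra_simps)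
      finally show "poly (char_poly (Q_mat r r (2 * r))) k = poly P k" .
    qed
    then show ?thesis by (simp add: poly_eq_poly_eq_iff)
  qed
  have ev: "eigenvalue (Q_mat r r (2 * r)) k \<longleftrightarrow> (k^2+k-1 = 0 \<or> k^2 - (2*real r - 1)*k - 1 = 0)" for k
  proof -
    have "2*r - 1 \<noteq> 0" using assms by simp
    then show ?thesis
      unfolding eigenvalue_root_char_poly[OF Q_carrier] CP evalP by simp
  qed
  define x0 :: real where "x0 = - (1 + sqrt 5) / 2"
  have s5: "sqrt 5 * sqrt 5 = (5::real)" by simp
  have s5g: "sqrt 5 > (2::real)"
    by (rule real_less_rsqrt, simp)
  have x0root: "x0^2 + x0 - 1 = 0"
    unfolding x0_def power2_eq_square by (simp add: field_simps s5)
  have lb: "x0 \<le> y" if "eigenvalue (Q_mat r r (2 * r)) y" for y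
  proof (rule ccontr)
    assume "\<not> x0 \<le> y"
    hence yl: "y < x0" by simp
    have x0l: "x0 < -3/2" unfolding x0_def using s5g by simp
    from that[unfolded ev] show False
    proof
      assume h: "y^2 + y - 1 = 0"
      have "(y - x0) * (y + x0 + 1) = (y^2+y-1) - (x0^2+x0-1)"
        by (simp add: power2_eq_square algebra_simps)
      also have "\<dots> = 0" using h x0root by simp
      finally have "(y - x0) * (y + x0 + 1) = 0" .
      moreover have "(y - x0) * (y + x0 + 1) > 0"
        by (rule mult_neg_neg, use yl x0l in auto)
      ultimately show False by (metis less_irrefl)
    next
      assume h: "y^2 - (2*real r - 1)*y - 1 = 0"
      have "1 < (-y)^2" by (rule one_less_power, use yl x0l in auto)
      hence "y^2 > 1" by simp
      moreover have "(2*real r - 1)*y \<le> 0"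
        using assms yl x0l by (intro mult_nonneg_nonpos, auto)
      ultimately show False using h by linarith
    qed
  qed
  have fin: "finite {k. eigenvalue (Q_mat r r (2 * r)) k}"
  proof -
    have "P \<noteq> 0"
    proof
      assume "P = 0"
      hence "poly P 0 = 0" by simp
      thus False unfolding evalP using assms by simp
    qed
    hence "finite {k. poly P k = 0}" by (rule poly_roots_finite)
    moreover have "{k. eigenvalue (Q_mat r r (2 * r)) k} = {k. poly P k = 0}"
      unfolding eigenvalue_root_char_poly[OF Q_carrier] CP ..
    ultimately show ?thesis by simp
  qed
  have "lambda_min (Q_mat r r (2 * r)) = x0"
    unfolding lambda_min_def
    by (rule Min_eqI[OF fin], use lb in blast, use x0root in \<open>simp add: ev\<close>)
  with CP show ?thesis unfolding P_def x0_def by simp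
qed

end
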